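(* Let $(\mathcal{M},\mathcal{L})$ be a regular symplectic pair with $\mathcal{M},\mathcal{L}\in\mathbb{C}^{2n\times2n}$ and $\mathrm{ind}_\infty(\mathcal{M},\mathcal{L})\le1$. Let $\hat n\le n$, $\ell=n-\hat n$, $U_0,U_\infty\in\mathbb{C}^{2n\times\ell}$, $U_1\in\mathbb{C}^{2n\times2\hat n}$, $\mathbf{U}=[U_1\,|\,U_0,U_\infty]$ and a symplectic $\widehat{\mathcal{S}}\in\mathbb{C}^{2\hat n\times2\hat n}$ satisfy $\mathbf{U}^H\mathcal{J}_n\mathbf{U}=\mathcal{J}_{\hat n}\oplus\mathcal{J}_\ell$, $\mathcal{M}U_0=0$, $\mathcal{L}U_\infty=0$, $\mathcal{M}U_1=\mathcal{L}U_1\widehat{\mathcal{S}}$. Let $\widehat{\mathcal{H}}\in\mathbb{C}^{2\hat n\times2\hat n}$ be a Hamiltonian matrix with $e^{\widehat{\mathcal{H}}}=\widehat{\mathcal{S}}$. Then the matrix $$\mathcal{H}=\mathbf{U}\begin{bmatrix}\widehat{\mathcal{H}}&0\\0&0_{2\ell}\end{bmatrix}(\mathcal{J}_{\hat n}\oplus\mathcal{J}_\ell)^H\mathbf{U}^H\mathcal{J}_n$$ is Hamiltonian.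
   Context: $\mathcal{J}_m=\begin{bmatrix}0&I_m\\-I_m&0\end{bmatrix}$. A matrix $\mathcal{H}\in\mathbb{C}^{2m\times2m}$ is Hamiltonian if $\mathcal{H}\mathcal{J}_m=(\mathcal{H}\mathcal{J}_m)^H$; $\mathcal{S}$ is symplectic if $\mathcal{S}\mathcal{J}_m\mathcal{S}^H=\mathcal{J}_m$. A pair $(\mathcal{M},\mathcal{L})$ is symplectic if $\mathcal{M}\mathcal{J}_n\mathcal{M}^H=\mathcal{L}\mathcal{J}_n\mathcal{L}^H$, regular if $\det(\mathcal{M}-\lambda\mathcal{L})\ne0$ for some $\lambda$. $\mathrm{ind}_\infty(A,B)$ is the nilpotency index of the nilpotent block $N$ in the Kronecker canonical form $PAQ=\mathrm{diag}(J,I)$, $PBQ=\mathrm{diag}(I,N)$ of a regular pair, and is $0$ if $B$ is invertible. *)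

theory Defs
  imports "Jordan_Normal_Form.Schur_Decomposition"
begin

definition Jmat :: "nat \<Rightarrow> complex mat" where
  "Jmat m = four_block_mat (0\<^sub>m m m) (1\<^sub>m m) (- 1\<^sub>m m) (0\<^sub>m m m)"

definition dsum :: "complex mat \<Rightarrow> complex mat \<Rightarrow> complex mat" where
  "dsum A B = four_block_mat A (0\<^sub>m (dim_row A) (dim_col B)) (0\<^sub>m (dim_row B) (dim_col A)) B"

definition hamiltonian :: "complex mat \<Rightarrow> bool" where
  "hamiltonian H \<longleftrightarrow> (\<exists>m. H \<in> carrier_mat (2*m) (2*m) \<and>
      H * Jmat m = mat_adjoint (H * Jmat m))"

definition symplectic :: "complex mat \<Rightarrow> bool" where
  "symplectic S \<longleftrightarrow> (\<exists>m. S \<in> carrier_mat (2*m) (2*m) \<and>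
      S * Jmat m * mat_adjoint S = Jmat m)"

definition symplectic_pair :: "nat \<Rightarrow> complex mat \<Rightarrow> complex mat \<Rightarrow> bool" where
  "symplectic_pair n M L \<longleftrightarrow> M \<in> carrier_mat (2*n) (2*n) \<and> L \<in> carrier_mat (2*n) (2*n) \<and>
      M * Jmat n * mat_adjoint M = L * Jmat n * mat_adjoint L"

definition regular_pair :: "complex mat \<Rightarrow> complex mat \<Rightarrow> bool" where
  "regular_pair A B \<longleftrightarrow> (\<exists>z. det (A - z \<cdot>\<^sub>m B) \<noteq> 0)"

text \<open>Index at infinity: nilpotency index of the nilpotent block N in a
  Weierstrass/Kronecker form P A Q = diag(J, I), P B Q = diag(I, N); 0 if B invertible.\<close>
definition ind_inf :: "complex mat \<Rightarrow> complex mat \<Rightarrow> nat" where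
  "ind_inf A B = (if invertible_mat B then 0 else
     (LEAST k. \<exists>P Q r s J N. P \<in> carrier_mat (dim_row A) (dim_row A) \<and>
        Q \<in> carrier_mat (dim_row A) (dim_row A) \<and> invertible_mat P \<and> invertible_mat Q \<and>
        r + s = dim_row A \<and> J \<in> carrier_mat r r \<and> N \<in> carrier_mat s s \<and>
        P * A * Q = four_block_mat J (0\<^sub>m r s) (0\<^sub>m s r) (1\<^sub>m s) \<and>
        P * B * Q = four_block_mat (1\<^sub>m r) (0\<^sub>m r s) (0\<^sub>m s r) N \<and>
        N ^\<^sub>m k = 0\<^sub>m s s))"

definition mat_exp :: "complex mat \<Rightarrow> complex mat" where
  "mat_exp H = mat (dim_row H) (dim_col H) (\<lambda>(i,j). \<Sum>k. (H ^\<^sub>m k) $$ (i,j) / of_nat (fact k))"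

end

theory Submission
  imports Defs
begin
lemma adj_alt: "mat_adjoint (A::complex mat) = mat (dim_col A) (dim_row A) (\<lambda>(i,j). cnj (A $$ (j,i)))"
  unfolding mat_adjoint_def
  by (rule eq_matI) (auto simp: mat_of_rows_def)

lemma adj_dims[simp]: "dim_row (mat_adjoint (A::complex mat)) = dim_col A" "dim_col (mat_adjoint A) = dim_row A"
  unfolding adj_alt by simp_all

lemma adj_index[simp]: "i < dim_col A \<Longrightarrow> j < dim_row A \<Longrightarrow> mat_adjoint (A::complex mat) $$ (i,j) = cnj (A $$ (j,i))"
  unfolding adj_alt by simp

lemma adj_carrier[simp]: "(A::complex mat) \<in> carrier_mat n m \<Longrightarrow> mat_adjoint A \<in> carrier_mat m n"
  unfolding carrier_mat_def by simp

lemma adj_adj[simp]: "mat_adjoint (mat_adjoint (A::complex mat)) = A"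
  by (rule eq_matI) simp_all

lemma adj_uminus: "mat_adjoint (- (A::complex mat)) = - mat_adjoint A"
  by (rule eq_matI) simp_all

lemma adj_zero[simp]: "mat_adjoint (0\<^sub>m n m :: complex mat) = 0\<^sub>m m n"
  by (rule eq_matI) simp_all

lemma adj_mult: assumes "dim_col A = dim_row (B::complex mat)"
  shows "mat_adjoint (A * B) = mat_adjoint B * mat_adjoint A"
proof (rule eq_matI)
  fix i j assume i: "i < dim_row (mat_adjoint B * mat_adjoint A)" and j: "j < dim_col (mat_adjoint B * mat_adjoint A)"
  then show "mat_adjoint (A * B) $$ (i, j) = (mat_adjoint B * mat_adjoint A) $$ (i, j)"
    using assms by (simp add: scalar_prod_def cnj_sum mult.commute)
qed simp_all

lemma adj_four_block: assumes "A \<in> carrier_mat n1 m1" "B \<in> carrier_mat n1 m2" "C \<in> carrier_mat n2 m1" "D \<in> carrier_mat n2 m2"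
  shows "mat_adjoint (four_block_mat A B C (D::complex mat)) = four_block_mat (mat_adjoint A) (mat_adjoint C) (mat_adjoint B) (mat_adjoint D)"
proof -
  have d: "dim_row A = n1" "dim_col A = m1" "dim_row B = n1" "dim_col B = m2"
     "dim_row C = n2" "dim_col C = m1" "dim_row D = n2" "dim_col D = m2" using assms by auto
  show ?thesis
  proof (rule eq_matI)
    fix i j assume ij: "i < dim_row (four_block_mat (mat_adjoint A) (mat_adjoint C) (mat_adjoint B) (mat_adjoint D))"
      "j < dim_col (four_block_mat (mat_adjoint A) (mat_adjoint C) (mat_adjoint B) (mat_adjoint D))"
    then have i: "i < m1 + m2" and j: "j < n1 + n2" by (simp_all only: index_mat_four_block adj_dims d)
    have L: "mat_adjoint (four_block_mat A B C D) $$ (i, j) = cnj (four_block_mat A B C D $$ (j,i))"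
      using i j by (simp only: adj_index index_mat_four_block d)
    show "mat_adjoint (four_block_mat A B C D) $$ (i, j) = four_block_mat (mat_adjoint A) (mat_adjoint C) (mat_adjoint B) (mat_adjoint D) $$ (i, j)"
      unfolding L using i j
      by (cases "i < m1"; cases "j < n1") (simp_all add: d)
  qed (simp_all add: d)
qed
lemma J_carrier[simp]: "Jmat m \<in> carrier_mat (2*m) (2*m)"
  unfolding Jmat_def carrier_mat_def by simp

lemma J_adj: "mat_adjoint (Jmat m) = - Jmat m"
  unfolding Jmat_def by (rule eq_matI) simp_all

lemma J_sq: "Jmat m * Jmat m = - 1\<^sub>m (2*m)"
proof -
  have "Jmat m * Jmat m = four_block_mat (0\<^sub>m m m * 0\<^sub>m m m + 1\<^sub>m m * - 1\<^sub>m m) (0\<^sub>m m m * 1\<^sub>m m + 1\<^sub>m m * 0\<^sub>m m m)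
    (- 1\<^sub>m m * 0\<^sub>m m m + 0\<^sub>m m m * - 1\<^sub>m m) (- 1\<^sub>m m * 1\<^sub>m m + 0\<^sub>m m m * 0\<^sub>m m m)"
    unfolding Jmat_def by (rule mult_four_block_mat[of _ m m _ m _ m _ _ m _ m _ _]) simp_all
  also have "\<dots> = - 1\<^sub>m (2*m)" by (rule eq_matI) (simp_all, linarith)
  finally show ?thesis .
qed

lemma J_dims[simp]: "dim_row (Jmat m) = 2*m" "dim_col (Jmat m) = 2*m"
  using J_carrier[of m] unfolding carrier_mat_def by simp_all

lemma uminus_zero_mat'[simp]: "- (0\<^sub>m n m :: complex mat) = 0\<^sub>m n m"
  by (rule eq_matI) simp_all

theorem theorem2p4:
  fixes n nh l :: nat and M L U0 Uinf U1 Sh Hh :: "complex mat"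
  assumes M: "M \<in> carrier_mat (2*n) (2*n)" and L: "L \<in> carrier_mat (2*n) (2*n)"
    and reg: "regular_pair M L"
    and sp: "symplectic_pair n M L"
    and ind: "ind_inf M L \<le> 1"
    and nh: "nh \<le> n" and l: "l = n - nh"
    and U0: "U0 \<in> carrier_mat (2*n) l" and Uinf: "Uinf \<in> carrier_mat (2*n) l"
    and U1: "U1 \<in> carrier_mat (2*n) (2*nh)"
    and Sh: "Sh \<in> carrier_mat (2*nh) (2*nh)" and Ssymp: "symplectic Sh"
    and UJU: "mat_adjoint (mat_of_cols (2*n) (cols U1 @ cols U0 @ cols Uinf)) * Jmat n
                * mat_of_cols (2*n) (cols U1 @ cols U0 @ cols Uinf) = dsum (Jmat nh) (Jmat l)"
    and MU0: "M * U0 = 0\<^sub>m (2*n) l"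
    and LUinf: "L * Uinf = 0\<^sub>m (2*n) l"
    and MU1: "M * U1 = L * U1 * Sh"
    and Hh: "Hh \<in> carrier_mat (2*nh) (2*nh)" and Hham: "hamiltonian Hh"
    and expH: "mat_exp Hh = Sh"
  shows "hamiltonian (mat_of_cols (2*n) (cols U1 @ cols U0 @ cols Uinf)
           * dsum Hh (0\<^sub>m (2*l) (2*l)) * mat_adjoint (dsum (Jmat nh) (Jmat l))
           * mat_adjoint (mat_of_cols (2*n) (cols U1 @ cols U0 @ cols Uinf)) * Jmat n)"
proof -
  define U where "U = mat_of_cols (2*n) (cols U1 @ cols U0 @ cols Uinf)"
  define K where "K = dsum Hh (0\<^sub>m (2*l) (2*l))"
  define D where "D = dsum (Jmat nh) (Jmat l)"
  define N where "N = 2*n"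
  have N: "2*nh + 2*l = N" using nh l N_def by simp
  have Uc: "U \<in> carrier_mat N N" unfolding U_def carrier_mat_def using U1 U0 Uinf N N_def by simp
  have Hd: "dim_row Hh = 2*nh" "dim_col Hh = 2*nh" using Hh by auto
  have Kc: "K \<in> carrier_mat N N" unfolding K_def dsum_def carrier_mat_def using Hd N by simp
  have Dc: "D \<in> carrier_mat N N" unfolding D_def dsum_def carrier_mat_def using N
    by (simp add: Jmat_def)
  have Jc: "Jmat n \<in> carrier_mat N N" using N_def by simp
  obtain m where m: "Hh \<in> carrier_mat (2*m) (2*m)" "Hh * Jmat m = mat_adjoint (Hh * Jmat m)"
    using Hham unfolding hamiltonian_def by blast
  have "m = nh" using m(1) Hh by auto
  with m have hJ: "mat_adjoint (Hh * Jmat nh) = Hh * Jmat nh" by simp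
  have adjD: "mat_adjoint D = four_block_mat (- Jmat nh) (0\<^sub>m (2*nh) (2*l)) (0\<^sub>m (2*l) (2*nh)) (- Jmat l)"
    unfolding D_def dsum_def
    by (subst adj_four_block[of _ "2*nh" "2*nh" _ "2*l" _ "2*l"]) (simp_all only: J_adj J_carrier zero_carrier_mat adj_zero J_dims)
  have KD: "K * mat_adjoint D = four_block_mat (- (Hh * Jmat nh)) (0\<^sub>m (2*nh) (2*l)) (0\<^sub>m (2*l) (2*nh)) (0\<^sub>m (2*l) (2*l))"
  proof -
    have "K * mat_adjoint D = four_block_mat (Hh * - Jmat nh + 0\<^sub>m (2*nh) (2*l) * 0\<^sub>m (2*l) (2*nh)) (Hh * 0\<^sub>m (2*nh) (2*l) + 0\<^sub>m (2*nh) (2*l) * - Jmat l)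
      (0\<^sub>m (2*l) (2*nh) * - Jmat nh + 0\<^sub>m (2*l) (2*l) * 0\<^sub>m (2*l) (2*nh)) (0\<^sub>m (2*l) (2*nh) * 0\<^sub>m (2*nh) (2*l) + 0\<^sub>m (2*l) (2*l) * - Jmat l)"
      unfolding adjD unfolding K_def dsum_def Hd index_zero_mat(2,3)
      by (rule mult_four_block_mat[of _ "2*nh" "2*nh" _ "2*l" _ "2*l" _ _ "2*nh" _ "2*l" _ _]) (simp_all add: Hh)
    also have "\<dots> = four_block_mat (- (Hh * Jmat nh)) (0\<^sub>m (2*nh) (2*l)) (0\<^sub>m (2*l) (2*nh)) (0\<^sub>m (2*l) (2*l))"
      using Hh by (intro cong_four_block_mat) simp_all
    finally show ?thesis .
  qed
  define P where "P = K * mat_adjoint D"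
  have adjP: "mat_adjoint P = P"
    unfolding P_def KD using Hh
    by (subst adj_four_block[of _ "2*nh" "2*nh" _ "2*l" _ "2*l"]) (simp_all add: hJ adj_uminus)
  have Pc: "P \<in> carrier_mat N N" unfolding P_def using Kc Dc by simp
  have aUc: "mat_adjoint U \<in> carrier_mat N N" using Uc by simp
  have aDc: "mat_adjoint D \<in> carrier_mat N N" using Dc by simp
  have Xc: "U * K * mat_adjoint D * mat_adjoint U \<in> carrier_mat N N"
    using Uc Kc aDc aUc by (meson mult_carrier_mat)
  have UPc: "U * P \<in> carrier_mat N N" using Uc Pc by (meson mult_carrier_mat)
  have Yc: "U * P * mat_adjoint U \<in> carrier_mat N N" using UPc aUc by (meson mult_carrier_mat)
  have a1: "U * K * mat_adjoint D * mat_adjoint U * Jmat n * Jmat n = U * K * mat_adjoint D * mat_adjoint U * (Jmat n * Jmat n)"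
    by (rule assoc_mult_mat[OF Xc Jc Jc])
  have a2: "U * K * mat_adjoint D = U * P" unfolding P_def by (rule assoc_mult_mat[OF Uc Kc aDc])
  have T: "U * K * mat_adjoint D * mat_adjoint U * Jmat n * Jmat n = - (U * P * mat_adjoint U)"
  proof -
    have "U * K * mat_adjoint D * mat_adjoint U * Jmat n * Jmat n = U * K * mat_adjoint D * mat_adjoint U * (Jmat n * Jmat n)"
      by (rule a1)
    also have "\<dots> = U * P * mat_adjoint U * (- 1\<^sub>m N)"
      by (simp only: a2 J_sq N_def)
    also have "\<dots> = - (U * P * mat_adjoint U * 1\<^sub>m N)" using Yc
      by (intro uminus_mult_right_mat) (simp only: carrier_mat_def mem_Collect_eq index_one_mat(2))
    also have "U * P * mat_adjoint U * 1\<^sub>m N = U * P * mat_adjoint U" by (rule right_mult_one_mat[OF Yc])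
    finally show ?thesis .
  qed
  have AP: "mat_adjoint (U * P * mat_adjoint U) = U * P * mat_adjoint U"
  proof -
    have d1: "dim_col (U * P) = dim_row (mat_adjoint U)" using UPc aUc by (metis carrier_matD)
    have d2: "dim_col U = dim_row P" using Uc Pc by (metis carrier_matD)
    have "mat_adjoint (U * P * mat_adjoint U) = U * mat_adjoint (U * P)"
      by (simp only: adj_mult[OF d1] adj_adj)
    also have "mat_adjoint (U * P) = P * mat_adjoint U"
      by (simp only: adj_mult[OF d2] adjP)
    also have "U * (P * mat_adjoint U) = U * P * mat_adjoint U" by (rule assoc_mult_mat[OF Uc Pc aUc, symmetric])
    finally show ?thesis .
  qed
  show ?thesis
    unfolding hamiltonian_def U_def[symmetric] K_def[symmetric] D_def[symmetric]
  proof (intro exI conjI)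
    show "U * K * mat_adjoint D * mat_adjoint U * Jmat n \<in> carrier_mat (2 * n) (2 * n)"
      using Xc Jc unfolding N_def by (meson mult_carrier_mat)
    show "U * K * mat_adjoint D * mat_adjoint U * Jmat n * Jmat n =
      mat_adjoint (U * K * mat_adjoint D * mat_adjoint U * Jmat n * Jmat n)"
      unfolding T by (simp only: adj_uminus AP)
  qed
qed

end
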